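(* \[\sum_{\pi\in\mathcal{C}_2}q^{|\pi|}=\sum_{m\ge0}\frac{q^{\binom{m+1}{2}}}{(q;q)_m}\sum_{j\ge0}q^{\binom j2}{m\brack j}.\]
   Context: An overpartition is a partition in which the first occurrence of each part size may be overlined, with parts listed in non-increasing order with respect to $1<\bar1<2<\bar2<\cdots$. A part is of size $t$ if it is $t$ or $\bar t$, and $|\pi|$ is the sum of the sizes of the parts. $\mathcal{C}_2$ is the set of overpartitions $(\pi_1,\dots,\pi_\ell)$, including the empty one, such that: - for each $1\le i<\ell$, the size of $\pi_i$ minus the size of $\pi_{i+1}$ is at least $1$, and at least $2$ if $\pi_i$ is non-overlined; - at most one part equals the non-overlined part $1$. $(q;q)_n=\prod_{i=1}^n(1-q^i)$. The Gaussian binomial is ${M\brack N}=\frac{(q;q)_M}{(q;q)_N(q;q)_{M-N}}$ for $0\le N\le M$ and $0$ otherwise. *)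

theory Defs
  imports "HOL-Computational_Algebra.Formal_Power_Series"
begin

text \<open>(part_key encodes the total order t < tbar < t+1 as 2t < 2t+1 < 2t+2.) An overpartition is a list of parts; a part is a pair (t, b) where t is its size
  and b says whether it is overlined.\<close>

definition part_key :: "nat \<times> bool \<Rightarrow> nat" where
  "part_key p = 2 * fst p + (if snd p then 1 else 0)"

definition is_overpartition :: "(nat \<times> bool) list \<Rightarrow> bool" where
  "is_overpartition \<pi> \<longleftrightarrow>
     (\<forall>p\<in>set \<pi>. fst p \<ge> 1) \<and>
     sorted_wrt (\<lambda>p r. part_key r \<le> part_key p) \<pi> \<and>
     (\<forall>i j. i < j \<and> j < length \<pi> \<and> fst (\<pi> ! i) = fst (\<pi> ! j) \<longrightarrow> \<not> snd (\<pi> ! j))"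

definition op_size :: "(nat \<times> bool) list \<Rightarrow> nat" where
  "op_size \<pi> = (\<Sum>p\<leftarrow>\<pi>. fst p)"

definition C2 :: "(nat \<times> bool) list set" where
  "C2 = {\<pi>. is_overpartition \<pi> \<and>
            (\<forall>i. Suc i < length \<pi> \<longrightarrow>
               int (fst (\<pi> ! i)) - int (fst (\<pi> ! Suc i)) \<ge> (if snd (\<pi> ! i) then 1 else 2)) \<and>
            length (filter (\<lambda>p. p = (1, False)) \<pi>) \<le> 1}"

definition C2_gf :: "rat fps" where
  "C2_gf = Abs_fps (\<lambda>n. of_nat (card {\<pi> \<in> C2. op_size \<pi> = n}))"

definition qpoch :: "nat \<Rightarrow> rat fps" where
  "qpoch n = (\<Prod>i=1..n. 1 - fps_X ^ i)"

definition qbinom :: "nat \<Rightarrow> nat \<Rightarrow> rat fps" where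
  "qbinom M N = (if N \<le> M then qpoch M * inverse (qpoch N * qpoch (M - N)) else 0)"

end

theory Submission
  imports Defs
begin


lemma qpoch_Suc: "qpoch (Suc n) = qpoch n * (1 - fps_X ^ Suc n)"
  by (simp add: qpoch_def)

lemma qpoch_0[simp]: "qpoch 0 = 1" by (simp add: qpoch_def)

lemma qpoch_nth0[simp]: "fps_nth (qpoch n) 0 = 1"
  by (induction n) (simp_all add: qpoch_Suc)

lemma qpoch_nz[simp]: "qpoch n \<noteq> 0"
  using qpoch_nth0[of n] by (metis fps_zero_nth zero_neq_one)

lemma qbinom_mult:
  assumes "N \<le> M" shows "qbinom M N * (qpoch N * qpoch (M - N)) = qpoch M"
proof -
  have "fps_nth (qpoch N * qpoch (M - N)) 0 \<noteq> 0" by simp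
  then have "inverse (qpoch N * qpoch (M - N)) * (qpoch N * qpoch (M - N)) = 1"
    by (rule inverse_mult_eq_1)
  then show ?thesis using assms by (simp add: qbinom_def mult.assoc)
qed

lemma qbinom_unique:
  assumes "N \<le> M" "x * (qpoch N * qpoch (M - N)) = qpoch M"
  shows "qbinom M N = x"
proof -
  have "(qbinom M N - x) * (qpoch N * qpoch (M - N)) = 0"
    using qbinom_mult[OF assms(1)] assms(2) by (simp add: algebra_simps)
  then show ?thesis by simp
qed

lemma qbinom_0[simp]: "qbinom m 0 = 1"
  by (rule qbinom_unique) auto

lemma qbinom_gt[simp]: "m < j \<Longrightarrow> qbinom m j = 0"
  by (simp add: qbinom_def)

lemma qbinom_diag[simp]: "qbinom m m = 1"
  by (rule qbinom_unique) auto

lemma qbinom_pascal: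
  assumes "1 \<le> j" "j \<le> Suc m"
  shows "qbinom (Suc m) j = qbinom m j + fps_X ^ (Suc m - j) * qbinom m (j - 1)"
proof (cases "j = Suc m")
  case True then show ?thesis by simp
next
  case False
  with assms have jm: "j \<le> m" by simp
  obtain i where i: "j = Suc i" using assms by (cases j) auto
  have e1: "qpoch (Suc m - j) = qpoch (m - j) * (1 - fps_X ^ (Suc m - j))"
    using jm by (metis Suc_diff_le qpoch_Suc)
  have e2: "qpoch j = qpoch i * (1 - fps_X ^ j)" using i qpoch_Suc by simp
  have a: "qbinom m j * (qpoch j * qpoch (Suc m - j)) = qpoch m * (1 - fps_X ^ (Suc m - j))"
    using qbinom_mult[OF jm] by (simp add: e1 mult_ac)
  have b: "qbinom m i * (qpoch j * qpoch (Suc m - j)) = qpoch m * (1 - fps_X ^ j)"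
  proof -
    have d: "Suc m - j = m - i" using i by simp
    have "qbinom m i * (qpoch j * qpoch (Suc m - j)) = (qbinom m i * (qpoch i * qpoch (m - i))) * (1 - fps_X ^ j)"
      unfolding e2 d by (simp add: mult_ac)
    then show ?thesis using qbinom_mult[of i m] i jm by simp
  qed
  have "(qbinom m j + fps_X ^ (Suc m - j) * qbinom m (j - 1)) * (qpoch j * qpoch (Suc m - j))
      = qbinom m j * (qpoch j * qpoch (Suc m - j)) + fps_X ^ (Suc m - j) * (qbinom m i * (qpoch j * qpoch (Suc m - j)))"
    using i by (simp add: algebra_simps)
  also have "\<dots> = qpoch m * (1 - fps_X ^ (Suc m - j)) + fps_X ^ (Suc m - j) * (qpoch m * (1 - fps_X ^ j))"
    by (simp only: a b)
  also have "\<dots> = qpoch m * (1 - fps_X ^ (Suc m - j + j))"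
    by (simp add: algebra_simps power_add)
  also have "\<dots> = qpoch (Suc m)" using jm by (simp add: qpoch_Suc)
  finally show ?thesis using assms by (intro qbinom_unique) auto
qed

lemma choose_0_2[simp]: "(0::nat) choose 2 = 0" by (simp add: numeral_2_eq_2)

lemma choose2_Suc: "Suc j choose 2 = (j choose 2) + j"
  by (simp add: numeral_2_eq_2)

lemma qbinom_thm:
  "(\<Sum>j\<le>m. fps_X ^ (j choose 2) * qbinom m j) = (\<Prod>k<m. 1 + fps_X ^ k :: rat fps)"
proof (induction m)
  case 0 then show ?case by simp
next
  case (Suc m)
  define S where "S = (\<Sum>j\<le>m. fps_X ^ (j choose 2) * qbinom m j :: rat fps)"
  have "(\<Sum>j\<le>Suc m. fps_X ^ (j choose 2) * qbinom (Suc m) j :: rat fps)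
     = 1 + (\<Sum>j\<le>m. fps_X ^ (Suc j choose 2) * qbinom (Suc m) (Suc j))"
    by (subst sum.atMost_Suc_shift) (simp add: numeral_2_eq_2)
  also have "\<dots> = 1 + (\<Sum>j\<le>m. fps_X ^ (Suc j choose 2) * qbinom m (Suc j))
        + (\<Sum>j\<le>m. fps_X ^ (Suc j choose 2) * (fps_X ^ (m - j) * qbinom m j))"
    by (simp add: qbinom_pascal algebra_simps sum.distrib)
  also have "1 + (\<Sum>j\<le>m. fps_X ^ (Suc j choose 2) * qbinom m (Suc j)) = S"
  proof -
    have "S = (\<Sum>j\<le>Suc m. fps_X ^ (j choose 2) * qbinom m j)"
      by (simp add: S_def)
    also have "\<dots> = 1 + (\<Sum>j\<le>m. fps_X ^ (Suc j choose 2) * qbinom m (Suc j))"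
      by (subst sum.atMost_Suc_shift) (simp add: numeral_2_eq_2)
    finally show ?thesis by simp
  qed
  also have "(\<Sum>j\<le>m. fps_X ^ (Suc j choose 2) * (fps_X ^ (m - j) * qbinom m j)) = fps_X ^ m * S"
    unfolding S_def sum_distrib_left
  proof (rule sum.cong)
    fix j assume "j \<in> {..m}"
    then have "(Suc j choose 2) + (m - j) = (j choose 2) + m" by (simp add: choose2_Suc)
    then show "fps_X ^ (Suc j choose 2) * (fps_X ^ (m - j) * qbinom m j)
       = fps_X ^ m * (fps_X ^ (j choose 2) * qbinom m j :: rat fps)"
      by (metis (no_types, lifting) add.commute mult.assoc power_add)
  qed simp
  finally show ?case using Suc by (simp add: S_def algebra_simps)
qed



definition D :: "(nat \<times> bool) list \<Rightarrow> bool" where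
  "D \<pi> \<longleftrightarrow> (\<forall>i. Suc i < length \<pi> \<longrightarrow> fst (\<pi> ! Suc i) + (if snd (\<pi> ! i) then 1 else 2) \<le> fst (\<pi> ! i))"

lemma D_sorted:
  assumes "D \<pi>" shows "sorted_wrt (\<lambda>p r. fst r < fst p) \<pi>"
proof -
  have tr: "transp (\<lambda>p r. fst r < (fst p::nat))" by (auto simp: transp_def)
  have "fst (\<pi> ! Suc i) < fst (\<pi> ! i)" if "Suc i < length \<pi>" for i
  proof -
    have "fst (\<pi> ! Suc i) + (if snd (\<pi> ! i) then 1 else 2) \<le> fst (\<pi> ! i)"
      using assms that unfolding D_def by blast
    then show ?thesis by (auto split: if_splits)
  qed
  then show ?thesis unfolding sorted_wrt_iff_nth_Suc_transp[OF tr] by blast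
qed

lemma C2_alt: "C2 = {\<pi>. (\<forall>p\<in>set \<pi>. 1 \<le> fst p) \<and> D \<pi>}"
proof (intro set_eqI iffI)
  fix \<pi> assume "\<pi> \<in> C2"
  then show "\<pi> \<in> {\<pi>. (\<forall>p\<in>set \<pi>. 1 \<le> fst p) \<and> D \<pi>}"
    unfolding C2_def is_overpartition_def D_def
    by (auto split: if_splits)
next
  fix \<pi> assume "\<pi> \<in> {\<pi>. (\<forall>p\<in>set \<pi>. 1 \<le> fst p) \<and> D \<pi>}"
  then have p1: "\<forall>p\<in>set \<pi>. 1 \<le> fst p" and d: "D \<pi>" by auto
  have s: "sorted_wrt (\<lambda>p r. fst r < fst p) \<pi>" using D_sorted[OF d] .
  have s2: "sorted_wrt (\<lambda>p r. part_key r \<le> part_key p) \<pi>"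
    by (rule sorted_wrt_mono_rel[OF _ s]) (auto simp: part_key_def)
  have ov: "\<forall>i j. i < j \<and> j < length \<pi> \<and> fst (\<pi> ! i) = fst (\<pi> ! j) \<longrightarrow> \<not> snd (\<pi> ! j)"
    using sorted_wrt_nth_less[OF s] by fastforce
  have gap: "\<forall>i. Suc i < length \<pi> \<longrightarrow>
               int (fst (\<pi> ! i)) - int (fst (\<pi> ! Suc i)) \<ge> (if snd (\<pi> ! i) then 1 else 2)"
    using d unfolding D_def by (auto split: if_splits)
  define ys where "ys = filter (\<lambda>p. p = (1, False)) \<pi>"
  have sy: "sorted_wrt (\<lambda>p r. fst r < fst p) ys" unfolding ys_def using s
    by (simp add: sorted_wrt_filter)
  have "length ys \<le> 1"
  proof (rule ccontr)
    assume "\<not> length ys \<le> 1"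
    then have l: "1 < length ys" by simp
    have "ys ! 0 \<in> set ys" "ys ! 1 \<in> set ys" using l by (metis less_trans zero_less_one nth_mem)+
    then have "ys ! 0 = (1, False)" "ys ! 1 = (1, False)" unfolding ys_def by auto
    with sorted_wrt_nth_less[OF sy, of 0 1] l show False by simp
  qed
  then show "\<pi> \<in> C2" unfolding C2_def is_overpartition_def ys_def using p1 s2 ov gap by auto
qed



fun incr :: "nat \<Rightarrow> (nat \<times> bool) list \<Rightarrow> bool" where
  "incr a [] = True"
| "incr a (x # xs) = (a + (if snd x then 0 else 1) \<le> fst x \<and> incr (fst x + 1) xs)"

fun gc :: "(nat \<times> bool) list \<Rightarrow> bool" where
  "gc (x # y # zs) = (fst x + (if snd y then 1 else 2) \<le> fst y \<and> gc (y # zs))"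
| "gc _ = True"

lemma gc_Cons: "gc (x # xs) = incr (fst x + 1) xs"
  by (induction xs arbitrary: x) auto

lemma gc_Cons2: "gc (x # ys) \<longleftrightarrow> (ys \<noteq> [] \<longrightarrow> fst x + (if snd (hd ys) then 1 else 2) \<le> fst (hd ys)) \<and> gc ys"
  by (cases ys) auto

lemma incr_ge: "incr a xs \<Longrightarrow> p \<in> set xs \<Longrightarrow> a \<le> fst p"
  by (induction xs arbitrary: a) (auto split: if_splits, (metis Suc_leD le_trans)+)

lemma D_snoc: "D (\<pi> @ [x]) \<longleftrightarrow> D \<pi> \<and> (\<pi> \<noteq> [] \<longrightarrow> fst x + (if snd (last \<pi>) then 1 else 2) \<le> fst (last \<pi>))"
proof
  assume h: "D (\<pi> @ [x])"
  have "D \<pi>" unfolding D_def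
  proof (intro allI impI)
    fix i assume i: "Suc i < length \<pi>"
    then show "fst (\<pi> ! Suc i) + (if snd (\<pi> ! i) then 1 else 2) \<le> fst (\<pi> ! i)"
      using h[unfolded D_def, rule_format, of i] by (simp add: nth_append)
  qed
  moreover have "\<pi> \<noteq> [] \<longrightarrow> fst x + (if snd (last \<pi>) then 1 else 2) \<le> fst (last \<pi>)"
  proof
    assume ne: "\<pi> \<noteq> []"
    then obtain k where k: "length \<pi> = Suc k" by (cases \<pi>) auto
    have l: "last \<pi> = \<pi> ! k" using ne k by (simp add: last_conv_nth)
    show "fst x + (if snd (last \<pi>) then 1 else 2) \<le> fst (last \<pi>)"
      using h[unfolded D_def, rule_format, of k] k l by (simp add: nth_append)
  qed
  ultimately show "D \<pi> \<and> (\<pi> \<noteq> [] \<longrightarrow> fst x + (if snd (last \<pi>) then 1 else 2) \<le> fst (last \<pi>))" ..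
next
  assume h: "D \<pi> \<and> (\<pi> \<noteq> [] \<longrightarrow> fst x + (if snd (last \<pi>) then 1 else 2) \<le> fst (last \<pi>))"
  show "D (\<pi> @ [x])" unfolding D_def
  proof (intro allI impI)
    fix i assume i: "Suc i < length (\<pi> @ [x])"
    show "fst ((\<pi> @ [x]) ! Suc i) + (if snd ((\<pi> @ [x]) ! i) then 1 else 2) \<le> fst ((\<pi> @ [x]) ! i)"
    proof (cases "Suc i < length \<pi>")
      case True
      then show ?thesis using h[THEN conjunct1, unfolded D_def, rule_format, of i]
        by (simp add: nth_append)
    next
      case False
      with i have e: "length \<pi> = Suc i" by simp
      then have ne: "\<pi> \<noteq> []" by auto
      have l: "last \<pi> = \<pi> ! i" using ne e by (simp add: last_conv_nth)
      show ?thesis using h ne e l by (simp add: nth_append)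
    qed
  qed
qed

lemma D_gc: "D \<pi> \<longleftrightarrow> gc (rev \<pi>)"
proof (induction \<pi> rule: rev_induct)
  case Nil then show ?case by (simp add: D_def)
next
  case (snoc x xs)
  then show ?case by (auto simp add: D_snoc gc_Cons2 hd_rev)
qed

definition sz :: "(nat \<times> bool) list \<Rightarrow> nat" where "sz xs = sum_list (map fst xs)"

lemma fin_len_sz: "finite {\<sigma>. length \<sigma> = m \<and> sz \<sigma> = n}"
proof (rule finite_subset)
  show "{\<sigma>. length \<sigma> = m \<and> sz \<sigma> = n} \<subseteq> {xs. set xs \<subseteq> {0..n} \<times> (UNIV :: bool set) \<and> length xs = m}"
  proof (rule subsetI)
    fix \<sigma> :: "(nat \<times> bool) list" assume s: "\<sigma> \<in> {\<sigma>. length \<sigma> = m \<and> sz \<sigma> = n}"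
    have "set \<sigma> \<subseteq> {0..n} \<times> (UNIV :: bool set)"
    proof
      fix p assume "p \<in> set \<sigma>"
      then have "fst p \<in> set (map fst \<sigma>)" by force
      then have "fst p \<le> sz \<sigma>" unfolding sz_def using member_le_sum_list[of "fst p" "map fst \<sigma>"] by simp
      then show "p \<in> {0..n} \<times> (UNIV :: bool set)" using s by (cases p) auto
    qed
    then show "\<sigma> \<in> {xs. set xs \<subseteq> {0..n} \<times> (UNIV :: bool set) \<and> length xs = m}" using s by auto
  qed
  show "finite {xs. set xs \<subseteq> {0..n} \<times> (UNIV :: bool set) \<and> length xs = m}"
    by (rule finite_lists_length_eq) auto
qed

definition Lset :: "nat \<Rightarrow> nat \<Rightarrow> nat \<Rightarrow> (nat \<times> bool) list set" where
  "Lset m a n = {\<sigma>. length \<sigma> = m \<and> incr a \<sigma> \<and> sz \<sigma> = n}"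

lemma fin_Lset: "finite (Lset m a n)"
  by (rule finite_subset[OF _ fin_len_sz[of m n]]) (auto simp: Lset_def)

definition g :: "nat \<Rightarrow> nat \<Rightarrow> rat fps" where
  "g m a = Abs_fps (\<lambda>n. of_nat (card (Lset m a n)))"

definition sh :: "(nat \<times> bool) list \<Rightarrow> (nat \<times> bool) list" where
  "sh = map (\<lambda>p. (Suc (fst p), snd p))"

lemma incr_sh: "incr (Suc a) (sh \<sigma>) \<longleftrightarrow> incr a \<sigma>"
  by (induction \<sigma> arbitrary: a) (auto simp: sh_def)

lemma sz_sh: "sz (sh \<sigma>) = sz \<sigma> + length \<sigma>"
  by (induction \<sigma>) (auto simp: sh_def sz_def)

lemma sz_ge: "\<forall>p\<in>set \<sigma>. 1 \<le> fst p \<Longrightarrow> length \<sigma> \<le> sz \<sigma>"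
  by (induction \<sigma>) (auto simp: sz_def)

lemma inj_sh: "inj sh"
  unfolding sh_def by (rule inj_mapI) (auto simp: inj_def prod_eq_iff)

lemma Lset_shift: "Lset m (Suc a) (n + m) = sh ` Lset m a n"
proof (intro set_eqI iffI)
  fix \<sigma>' assume h: "\<sigma>' \<in> Lset m (Suc a) (n + m)"
  define \<sigma> where "\<sigma> = map (\<lambda>p. (fst p - 1, snd p)) \<sigma>'"
  have ge: "\<forall>p\<in>set \<sigma>'. Suc a \<le> fst p" using h incr_ge by (auto simp: Lset_def)
  have e: "sh \<sigma> = \<sigma>'" unfolding sh_def \<sigma>_def map_map
    by (rule map_idI) (use ge in fastforce)
  have "\<sigma> \<in> Lset m a n" using h e incr_sh[of a \<sigma>] sz_sh[of \<sigma>]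
    by (auto simp: Lset_def \<sigma>_def)
  then show "\<sigma>' \<in> sh ` Lset m a n" using e by blast
next
  fix \<sigma>' assume "\<sigma>' \<in> sh ` Lset m a n"
  then show "\<sigma>' \<in> Lset m (Suc a) (n + m)"
    by (auto simp: Lset_def incr_sh sz_sh) (simp add: sh_def)
qed

lemma Lset_small: "k < m \<Longrightarrow> Lset m (Suc a) k = {}"
proof -
  assume k: "k < m"
  { fix \<sigma> assume "\<sigma> \<in> Lset m (Suc a) k"
    then have "length \<sigma> = m" "sz \<sigma> = k" by (auto simp: Lset_def)
    have "\<forall>p\<in>set \<sigma>. 1 \<le> fst p"
      using \<open>\<sigma> \<in> Lset m (Suc a) k\<close> incr_ge[of "Suc a" \<sigma>] by (fastforce simp: Lset_def)
    then have False using sz_ge k \<open>length \<sigma> = m\<close> \<open>sz \<sigma> = k\<close> by fastforce }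
  then show ?thesis by blast
qed

lemma g_shift: "g m (Suc a) = fps_X ^ m * g m a"
proof (rule fps_ext)
  fix n
  show "fps_nth (g m (Suc a)) n = fps_nth (fps_X ^ m * g m a) n"
  proof (cases "n < m")
    case True then show ?thesis by (simp add: fps_X_power_mult_nth g_def Lset_small)
  next
    case False
    then have "n = (n - m) + m" by simp
    then have "Lset m (Suc a) n = sh ` Lset m a (n - m)" by (metis Lset_shift)
    then have "card (Lset m (Suc a) n) = card (Lset m a (n - m))"
      using card_image[OF inj_on_subset[OF inj_sh subset_UNIV]] by simp
    then show ?thesis using False by (simp add: fps_X_power_mult_nth g_def)
  qed
qed



lemma sz_Cons[simp]: "sz (x # xs) = fst x + sz xs" by (simp add: sz_def)
lemma sz_Nil[simp]: "sz [] = 0" by (simp add: sz_def)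

lemma incr_mono: "a \<le> b \<Longrightarrow> incr b \<sigma> \<Longrightarrow> incr a \<sigma>"
  by (cases \<sigma>) auto

lemma Lset_dec:
  "Lset (Suc m) a n =
     (if a \<le> n then (#) (a, True) ` Lset m (Suc a) (n - a) else {}) \<union>
     (if Suc a \<le> n then (#) (Suc a, False) ` Lset m (Suc (Suc a)) (n - Suc a) else {}) \<union>
     Lset (Suc m) (Suc a) n" (is "?L = ?A \<union> ?B \<union> ?C")
proof (intro set_eqI iffI)
  fix \<sigma> assume h: "\<sigma> \<in> ?L"
  then obtain x \<rho> where s: "\<sigma> = x # \<rho>" and l: "length \<rho> = m" by (cases \<sigma>) (auto simp: Lset_def)
  obtain t b where x: "x = (t, b)" by (cases x)
  have i: "a + (if b then 0 else 1) \<le> t" "incr (t + 1) \<rho>" and z: "t + sz \<rho> = n"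
    using h s x by (auto simp: Lset_def sz_def)
  show "\<sigma> \<in> ?A \<union> ?B \<union> ?C"
  proof (cases "a + (if b then 0 else 1) < t")
    case True
    then have "\<sigma> \<in> ?C" using h s x i by (auto simp: Lset_def)
    then show ?thesis by blast
  next
    case False
    with i have t: "t = a + (if b then 0 else 1)" by simp
    show ?thesis
    proof (cases b)
      case True
      then have "\<rho> \<in> Lset m (Suc a) (n - a)" "a \<le> n" using t i z l by (auto simp: Lset_def)
      then have "\<sigma> \<in> ?A" using s x t True by auto
      then show ?thesis by blast
    next
      case False
      then have "\<rho> \<in> Lset m (Suc (Suc a)) (n - Suc a)" "Suc a \<le> n" using t i z l by (auto simp: Lset_def)
      then have "\<sigma> \<in> ?B" using s x t False by auto
      then show ?thesis by blast
    qed
  qed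
next
  fix \<sigma> assume h: "\<sigma> \<in> ?A \<union> ?B \<union> ?C"
  show "\<sigma> \<in> ?L"
  proof (cases "\<sigma> \<in> ?C")
    case True then show ?thesis using incr_mono[of a "Suc a" \<sigma>] by (auto simp: Lset_def)
  next
    case False
    with h have "\<sigma> \<in> ?A \<or> \<sigma> \<in> ?B" by blast
    then show ?thesis
    proof
      assume "\<sigma> \<in> ?A"
      then obtain \<rho> where an: "a \<le> n" and r: "\<rho> \<in> Lset m (Suc a) (n - a)" and s: "\<sigma> = (a, True) # \<rho>"
        by (auto split: if_splits)
      then show ?thesis unfolding Lset_def by auto
    next
      assume "\<sigma> \<in> ?B"
      then obtain \<rho> where an: "Suc a \<le> n" and r: "\<rho> \<in> Lset m (Suc (Suc a)) (n - Suc a)" and s: "\<sigma> = (Suc a, False) # \<rho>"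
        by (auto split: if_splits)
      then show ?thesis unfolding Lset_def by auto
    qed
  qed
qed

lemma card_Cons_img: "finite A \<Longrightarrow> card ((#) x ` A) = card A"
  by (rule card_image) auto

lemma card_Lset_dec:
  "card (Lset (Suc m) a n) =
     (if a \<le> n then card (Lset m (Suc a) (n - a)) else 0) +
     (if Suc a \<le> n then card (Lset m (Suc (Suc a)) (n - Suc a)) else 0) +
     card (Lset (Suc m) (Suc a) n)"
proof -
  define A where "A = (if a \<le> n then (#) (a, True) ` Lset m (Suc a) (n - a) else {})"
  define B where "B = (if Suc a \<le> n then (#) (Suc a, False) ` Lset m (Suc (Suc a)) (n - Suc a) else {})"
  define C where "C = Lset (Suc m) (Suc a) n"
  have fA: "finite A" and fB: "finite B" and fC: "finite C"
    by (auto simp: A_def B_def C_def fin_Lset)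
  have hA: "hd \<sigma> = (a, True)" if "\<sigma> \<in> A" for \<sigma>
    using that unfolding A_def by (auto split: if_splits)
  have hB: "hd \<sigma> = (Suc a, False)" if "\<sigma> \<in> B" for \<sigma>
    using that unfolding B_def by (auto split: if_splits)
  have hC: "Suc a + (if snd (hd \<sigma>) then 0 else 1) \<le> fst (hd \<sigma>)" if "\<sigma> \<in> C" for \<sigma>
  proof -
    from that obtain x \<rho> where "\<sigma> = x # \<rho>" "incr (Suc a) (x # \<rho>)"
      unfolding C_def Lset_def by (cases \<sigma>) auto
    then show ?thesis by simp
  qed
  have dAB: "A \<inter> B = {}" using hA hB by fastforce
  have dABC: "(A \<union> B) \<inter> C = {}"
  proof -
    { fix \<sigma> assume "\<sigma> \<in> A" "\<sigma> \<in> C" then have False using hA[of \<sigma>] hC[of \<sigma>] by simp }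
    moreover
    { fix \<sigma> assume "\<sigma> \<in> B" "\<sigma> \<in> C" then have False using hB[of \<sigma>] hC[of \<sigma>] by simp }
    ultimately show ?thesis by blast
  qed
  have "card (Lset (Suc m) a n) = card (A \<union> B \<union> C)"
    unfolding A_def B_def C_def by (rule arg_cong[where f=card], rule Lset_dec)
  also have "\<dots> = card A + card B + card C"
    using fA fB fC dAB dABC by (simp add: card_Un_disjoint)
  also have "card A = (if a \<le> n then card (Lset m (Suc a) (n - a)) else 0)"
    by (simp add: A_def card_Cons_img fin_Lset)
  also have "card B = (if Suc a \<le> n then card (Lset m (Suc (Suc a)) (n - Suc a)) else 0)"
    by (simp add: B_def card_Cons_img fin_Lset)
  finally show ?thesis by (simp add: C_def)
qed

lemma g_dec: "g (Suc m) a = fps_X ^ a * g m (Suc a) + fps_X ^ Suc a * g m (Suc (Suc a)) + g (Suc m) (Suc a)"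
proof (rule fps_ext)
  fix n
  show "fps_nth (g (Suc m) a) n = fps_nth (fps_X ^ a * g m (Suc a) + fps_X ^ Suc a * g m (Suc (Suc a)) + g (Suc m) (Suc a)) n"
    unfolding fps_add_nth fps_X_power_mult_nth g_def fps_nth_Abs_fps
    by (subst card_Lset_dec) (auto simp: not_less)
qed

lemma g_0: "g 0 a = 1"
proof (rule fps_ext)
  fix n
  have "Lset 0 a n = (if n = 0 then {[]} else {})" by (auto simp: Lset_def sz_def)
  then show "fps_nth (g 0 a) n = fps_nth 1 n" by (simp add: g_def)
qed

lemma g_pow: "g m a = fps_X ^ (m * a) * g m 0"
  by (induction a) (simp_all add: g_shift power_add mult.assoc)

definition h :: "nat \<Rightarrow> rat fps" where "h m = g m 0"

lemma h_rec: "(1 - fps_X ^ Suc m) * h (Suc m) = (fps_X ^ m + fps_X ^ (2 * m + 1)) * h m"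
proof -
  have d: "g (Suc m) 0 = g m 1 + fps_X * g m 2 + g (Suc m) 1"
    using g_dec[of m 0] by (simp add: numeral_2_eq_2)
  have g1: "g m 1 = fps_X ^ m * h m" using g_pow[of m 1] by (simp add: h_def)
  have g2: "g m 2 = fps_X ^ (2 * m) * h m" using g_pow[of m 2] by (simp add: h_def mult.commute)
  have g3: "g (Suc m) 1 = fps_X ^ Suc m * h (Suc m)" using g_pow[of "Suc m" 1] by (simp add: h_def)
  have "h (Suc m) = fps_X ^ m * h m + fps_X * (fps_X ^ (2 * m) * h m) + fps_X ^ Suc m * h (Suc m)"
    using d unfolding g1 g2 g3 by (simp add: h_def)
  then show ?thesis by (simp add: algebra_simps power_add)
qed

lemma h_closed: "qpoch m * h m = fps_X ^ (m choose 2) * (\<Prod>k<m. 1 + fps_X ^ Suc k)"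
proof (induction m)
  case 0 then show ?case by (simp add: h_def g_0)
next
  case (Suc m)
  have "qpoch (Suc m) * h (Suc m) = qpoch m * ((1 - fps_X ^ Suc m) * h (Suc m))"
    by (simp add: qpoch_Suc mult_ac)
  also have "\<dots> = qpoch m * ((fps_X ^ m + fps_X ^ (2 * m + 1)) * h m)"
    by (simp only: h_rec)
  also have "\<dots> = (fps_X ^ m * (1 + fps_X ^ Suc m)) * (qpoch m * h m)"
    by (simp add: algebra_simps power_add mult_2 mult_2_right)
  also have "\<dots> = fps_X ^ (Suc m choose 2) * (\<Prod>k<Suc m. 1 + fps_X ^ Suc k)"
    by (simp add: Suc choose2_Suc power_add mult_ac)
  finally show ?case .
qed

definition Pset :: "nat \<Rightarrow> nat \<Rightarrow> (nat \<times> bool) list set" where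
  "Pset m n = {\<sigma>. length \<sigma> = m \<and> (\<forall>p\<in>set \<sigma>. 1 \<le> fst p) \<and> gc \<sigma> \<and> sz \<sigma> = n}"

lemma C2_rev: "{\<pi> \<in> C2. length \<pi> = m \<and> op_size \<pi> = n} = rev ` Pset m n"
proof -
  have "\<pi> \<in> C2 \<longleftrightarrow> (\<forall>p\<in>set \<pi>. 1 \<le> fst p) \<and> gc (rev \<pi>)" for \<pi>
    by (simp add: C2_alt D_gc)
  moreover have "op_size \<pi> = sz (rev \<pi>)" for \<pi>
    by (simp add: op_size_def sz_def rev_map[symmetric] sum_list_rev)
  ultimately have eq: "\<pi> \<in> {\<pi> \<in> C2. length \<pi> = m \<and> op_size \<pi> = n} \<longleftrightarrow> rev \<pi> \<in> Pset m n" for \<pi>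
    unfolding Pset_def by auto
  show ?thesis
  proof (intro set_eqI iffI)
    fix \<pi> assume "\<pi> \<in> {\<pi> \<in> C2. length \<pi> = m \<and> op_size \<pi> = n}"
    then have "rev \<pi> \<in> Pset m n" using eq by blast
    then show "\<pi> \<in> rev ` Pset m n" by (metis image_eqI rev_rev_ident)
  next
    fix \<pi> assume "\<pi> \<in> rev ` Pset m n"
    then obtain \<sigma> where "\<sigma> \<in> Pset m n" "\<pi> = rev \<sigma>" by blast
    then show "\<pi> \<in> {\<pi> \<in> C2. length \<pi> = m \<and> op_size \<pi> = n}" using eq by simp
  qed
qed

lemma card_C2_len: "card {\<pi> \<in> C2. length \<pi> = m \<and> op_size \<pi> = n} = card (Pset m n)"
  unfolding C2_rev by (rule card_image) (auto simp: inj_on_def)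

lemma Pset_Suc: "Pset (Suc m) n = Lset (Suc m) 1 n \<union> (if 1 \<le> n then (#) (1, False) ` Lset m 2 (n - 1) else {})"
proof (intro set_eqI iffI)
  fix \<sigma> assume h: "\<sigma> \<in> Pset (Suc m) n"
  then obtain x \<rho> where s: "\<sigma> = x # \<rho>" by (cases \<sigma>) (auto simp: Pset_def)
  obtain t b where x: "x = (t, b)" by (cases x)
  have t1: "1 \<le> t" and ir: "incr (t + 1) \<rho>" and l: "length \<rho> = m" and z: "t + sz \<rho> = n"
    using h s x by (auto simp: Pset_def gc_Cons sz_def)
  show "\<sigma> \<in> Lset (Suc m) 1 n \<union> (if 1 \<le> n then (#) (1, False) ` Lset m 2 (n - 1) else {})"
  proof (cases "\<not> b \<and> t = 1")
    case True
    then have "\<rho> \<in> Lset m 2 (n - 1)" "1 \<le> n" using ir l z by (auto simp: Lset_def numeral_2_eq_2)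
    then show ?thesis using s x True by auto
  next
    case False
    then have "1 + (if b then 0 else 1) \<le> t" using t1 by auto
    then have "\<sigma> \<in> Lset (Suc m) 1 n" using s x ir l z by (auto simp: Lset_def sz_def)
    then show ?thesis by blast
  qed
next
  fix \<sigma> assume h: "\<sigma> \<in> Lset (Suc m) 1 n \<union> (if 1 \<le> n then (#) (1, False) ` Lset m 2 (n - 1) else {})"
  show "\<sigma> \<in> Pset (Suc m) n"
  proof (cases "\<sigma> \<in> Lset (Suc m) 1 n")
    case True
    then obtain x \<rho> where s: "\<sigma> = x # \<rho>" by (cases \<sigma>) (auto simp: Lset_def)
    have ir: "incr (fst x + 1) \<rho>" "1 \<le> fst x" using True s by (auto simp: Lset_def split: if_splits)
    have "\<forall>p\<in>set \<rho>. 1 \<le> fst p" using incr_ge[OF ir(1)] by fastforce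
    then show ?thesis using True s ir by (auto simp: Lset_def Pset_def gc_Cons)
  next
    case False
    then obtain \<rho> where s: "\<sigma> = (1, False) # \<rho>" and r: "\<rho> \<in> Lset m 2 (n - 1)" and n1: "1 \<le> n"
      using h by (auto split: if_splits)
    have "\<forall>p\<in>set \<rho>. 1 \<le> fst p" using r incr_ge[of 2 \<rho>] by (fastforce simp: Lset_def)
    then show ?thesis using s r n1 by (auto simp: Lset_def Pset_def gc_Cons sz_def numeral_2_eq_2)
  qed
qed

lemma card_Pset_Suc:
  "card (Pset (Suc m) n) = card (Lset (Suc m) 1 n) + (if 1 \<le> n then card (Lset m 2 (n - 1)) else 0)"
proof -
  have d: "Lset (Suc m) 1 n \<inter> (if 1 \<le> n then (#) (1, False) ` Lset m 2 (n - 1) else {}) = {}"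
  proof -
    { fix \<sigma> assume a1: "\<sigma> \<in> Lset (Suc m) 1 n" and a2: "\<sigma> \<in> (#) (1, False) ` Lset m 2 (n - 1)"
      from a2 obtain \<rho> where "\<sigma> = (1, False) # \<rho>" by blast
      with a1 have False by (simp add: Lset_def) }
    then show ?thesis by auto
  qed
  show ?thesis unfolding Pset_Suc
    using d by (subst card_Un_disjoint) (simp_all add: fin_Lset card_Cons_img)
qed

definition e :: "nat \<Rightarrow> rat fps" where
  "e m = Abs_fps (\<lambda>n. of_nat (card {\<pi> \<in> C2. length \<pi> = m \<and> op_size \<pi> = n}))"

lemma e_0: "e 0 = 1"
proof (rule fps_ext)
  fix n
  have "Pset 0 n = (if n = 0 then {[]} else {})" by (auto simp: Pset_def sz_def)
  then show "fps_nth (e 0) n = fps_nth 1 n" unfolding e_def fps_nth_Abs_fps card_C2_len by simp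
qed

lemma e_Suc: "e (Suc m) = g (Suc m) 1 + fps_X * g m 2"
proof (rule fps_ext)
  fix n
  show "fps_nth (e (Suc m)) n = fps_nth (g (Suc m) 1 + fps_X * g m 2) n"
    using fps_X_power_mult_nth[of 1 "g m 2" n]
    unfolding e_def fps_nth_Abs_fps card_C2_len card_Pset_Suc by (simp add: g_def not_less)
qed


lemma alg1: fixes E Q1 Q0 c x y H1 H0 :: "'a::comm_ring_1"
  assumes "E = x * H1 + y * H0" "Q1 = Q0 * c"
  shows "Q1 * E = x * (Q1 * H1) + y * (c * (Q0 * H0))"
  using assms by (simp add: algebra_simps)

lemma alg2: fixes a b y d P z :: "'a::comm_ring_1"
  shows "a * (b * (P * (1 + z))) + y * ((1 - z) * (d * P)) = (a * b) * P * (1 + z) + (y * d) * P * (1 - z)"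
  by (simp add: algebra_simps)

lemma alg3: fixes w P z :: "'a::comm_ring_1"
  shows "w * P * (1 + z) + w * P * (1 - z) = w * (2 * P)"
  by (simp add: algebra_simps)

lemma e_closed: "qpoch m * e m = fps_X ^ (Suc m choose 2) * (\<Prod>k<m. 1 + fps_X ^ k)"
proof (cases m)
  case 0
  have z: "Suc 0 choose 2 = 0" by (simp only: choose2_Suc choose_0_2 add_0_right)
  show ?thesis unfolding 0 z by (simp add: e_0)
next
  case (Suc k)
  define P where "P = (\<Prod>i<k. 1 + fps_X ^ Suc i :: rat fps)"
  define N where "N = k choose 2"
  have hk: "qpoch k * h k = fps_X ^ N * P" unfolding N_def P_def by (rule h_closed)
  have hk1: "qpoch (Suc k) * h (Suc k) = fps_X ^ (N + k) * (P * (1 + fps_X ^ Suc k))"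
    using h_closed[of "Suc k"] unfolding N_def P_def by (simp add: choose2_Suc)
  have g1: "g (Suc k) 1 = fps_X ^ Suc k * h (Suc k)" using g_pow[of "Suc k" 1] by (simp add: h_def)
  have g2: "g k 2 = fps_X ^ (2 * k) * h k" using g_pow[of k 2] by (simp add: h_def mult.commute)
  have eS: "e (Suc k) = fps_X ^ Suc k * h (Suc k) + fps_X ^ (2 * k + 1) * h k"
  proof -
    have "fps_X * (fps_X ^ (2 * k) * h k) = fps_X ^ (2 * k + 1) * h k" by (simp add: mult.assoc)
    then show ?thesis unfolding e_Suc g1 g2 by simp
  qed
  have "qpoch (Suc k) * e (Suc k) = fps_X ^ Suc k * (qpoch (Suc k) * h (Suc k))
          + fps_X ^ (2 * k + 1) * ((1 - fps_X ^ Suc k) * (qpoch k * h k))"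
    by (rule alg1[OF eS qpoch_Suc])
  also have "\<dots> = (fps_X ^ Suc k * fps_X ^ (N + k)) * P * (1 + fps_X ^ Suc k)
       + (fps_X ^ (2 * k + 1) * fps_X ^ N) * P * (1 - fps_X ^ Suc k)"
    unfolding hk hk1 by (rule alg2)
  also have "fps_X ^ Suc k * fps_X ^ (N + k) = (fps_X ^ (N + 2 * k + 1) :: rat fps)"
  proof -
    have "Suc k + (N + k) = N + 2 * k + 1" by simp
    then show ?thesis by (simp only: power_add[symmetric])
  qed
  also have "fps_X ^ (2 * k + 1) * fps_X ^ N = (fps_X ^ (N + 2 * k + 1) :: rat fps)"
  proof -
    have "2 * k + 1 + N = N + 2 * k + 1" by simp
    then show ?thesis by (simp only: power_add[symmetric])
  qed
  also have "fps_X ^ (N + 2 * k + 1) * P * (1 + fps_X ^ Suc k) + fps_X ^ (N + 2 * k + 1) * P * (1 - fps_X ^ Suc k)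
     = fps_X ^ (N + 2 * k + 1) * (2 * P)" by (rule alg3)
  also have "\<dots> = fps_X ^ (Suc (Suc k) choose 2) * (\<Prod>i<Suc k. 1 + fps_X ^ i)"
  proof -
    have "Suc (Suc k) choose 2 = N + 2 * k + 1" unfolding N_def by (simp add: choose2_Suc)
    moreover have "(\<Prod>i<Suc k. 1 + fps_X ^ i :: rat fps) = 2 * P"
      unfolding P_def by (subst prod.lessThan_Suc_shift) simp
    ultimately show ?thesis by simp
  qed
  finally show ?thesis using Suc by simp
qed

lemma alg4: fixes i q e r :: "'a::comm_ring_1"
  assumes "i * q = 1" "q * e = r" shows "e = i * r"
proof -
  have "e = (i * q) * e" using assms(1) by simp
  also have "\<dots> = i * r" using assms(2) by (simp only: mult.assoc)
  finally show ?thesis .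
qed

lemma alg5: fixes a i S :: "'a::comm_ring_1" shows "a * i * S = i * (a * S)"
  by (simp only: mult_ac)

lemma term_eq: "fps_X ^ ((m + 1) choose 2) * inverse (qpoch m) *
              (\<Sum>j\<le>m. fps_X ^ (j choose 2) * qbinom m j) = e m"
proof -
  have inv: "inverse (qpoch m) * qpoch m = 1" by (rule inverse_mult_eq_1) simp
  have c: "e m = inverse (qpoch m) * (fps_X ^ (Suc m choose 2) * (\<Prod>k<m. 1 + fps_X ^ k))"
    by (rule alg4[OF inv e_closed])
  have s: "m + 1 = Suc m" by simp
  show ?thesis unfolding qbinom_thm c s by (rule alg5)
qed

lemma fin_C2_len: "finite {\<pi> \<in> C2. length \<pi> = m \<and> op_size \<pi> = n}"
  unfolding C2_rev by (rule finite_imageI) (rule finite_subset[OF _ fin_len_sz[of m n]], auto simp: Pset_def)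

lemma C2_len_le: "\<pi> \<in> C2 \<Longrightarrow> length \<pi> \<le> op_size \<pi>"
proof -
  assume "\<pi> \<in> C2"
  then have "\<forall>p\<in>set \<pi>. 1 \<le> fst p" by (simp add: C2_alt)
  then have "length \<pi> \<le> sz \<pi>" by (rule sz_ge)
  then show ?thesis by (simp add: op_size_def sz_def)
qed

theorem mainTheorem17:
  shows "(\<lambda>m. fps_X ^ ((m + 1) choose 2) * inverse (qpoch m) *
              (\<Sum>j\<le>m. fps_X ^ (j choose 2) * qbinom m j)) sums C2_gf"
proof -
  have "e sums C2_gf"
    unfolding sums_def
  proof (rule tendsto_fpsI)
    fix n
    show "eventually (\<lambda>N. fps_nth (sum e {..<N}) n = fps_nth C2_gf n) sequentially"
      unfolding eventually_sequentially
    proof (intro exI allI impI)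
      fix N assume N: "Suc n \<le> N"
      define A where "A = (\<lambda>m. {\<pi> \<in> C2. length \<pi> = m \<and> op_size \<pi> = n})"
      have U: "(\<Union>m\<in>{..<N}. A m) = {\<pi> \<in> C2. op_size \<pi> = n}"
      proof (intro set_eqI iffI)
        fix \<pi> assume "\<pi> \<in> {\<pi> \<in> C2. op_size \<pi> = n}"
        then have "\<pi> \<in> A (length \<pi>)" "length \<pi> < N" using C2_len_le[of \<pi>] N by (auto simp: A_def)
        then show "\<pi> \<in> (\<Union>m\<in>{..<N}. A m)" by blast
      qed (auto simp: A_def)
      have "card (\<Union>m\<in>{..<N}. A m) = (\<Sum>m<N. card (A m))"
        by (rule card_UN_disjoint) (auto simp: A_def fin_C2_len)
      then have "of_nat (card {\<pi> \<in> C2. op_size \<pi> = n}) = (\<Sum>m<N. of_nat (card (A m)) :: rat)"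
        using U by simp
      then show "fps_nth (sum e {..<N}) n = fps_nth C2_gf n"
        by (simp add: fps_sum_nth e_def C2_gf_def A_def)
    qed
  qed
  then show ?thesis using term_eq by simp
qed


end
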